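(* Let $P,Q$ be mutually absolutely continuous probability measures, let $E$ be measurable, $q:=Q(E)$, and $r:=\chi^2(Q\Vert P)$. Then $$P(E)\le\frac{r+2q+\sqrt{r^2+4r\,q(1-q)}}{2(1+r)}.$$
   Context: $\chi^2(Q\Vert P):=\int\big(\tfrac{\mathrm dQ}{\mathrm dP}\big)^2\mathrm dP-1$; equivalently it is the $f$-divergence $D_f(P\Vert Q)=\int f(\mathrm dP/\mathrm dQ)\,\mathrm dQ$ with $f(t)=1/t-1$. *)

theory Defs
  imports "HOL-Probability.Probability"
begin

definition chi2 :: "'a measure \<Rightarrow> 'a measure \<Rightarrow> ennreal" where
  "chi2 Q P = (\<integral>\<^sup>+ x. (RN_deriv P Q x)\<^sup>2 \<partial>P) - 1"

end

theory Submission
  imports Defs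
begin

lemma quad_root_bound:
  fixes p q r :: real
  assumes r: "r \<ge> 0" and h: "(q - p)^2 \<le> r * p * (1 - p)"
  shows "p \<le> (r + 2 * q + sqrt (r\<^sup>2 + 4 * r * q * (1 - q))) / (2 * (1 + r))"
proof -
  have h2: "(2 * (1 + r) * p - (r + 2 * q))^2 \<le> r\<^sup>2 + 4 * r * q * (1 - q)"
  proof -
    have "(1 + r) * ((q - p)^2 - r * p * (1 - p)) \<le> 0"
      using h r by (intro mult_nonneg_nonpos) auto
    then show ?thesis by (simp add: power2_eq_square algebra_simps)
  qed
  have "2 * (1 + r) * p - (r + 2 * q) \<le> sqrt (r\<^sup>2 + 4 * r * q * (1 - q))"
    using h2 real_le_rsqrt by blast
  then show ?thesis using r by (simp add: field_simps)
qed

lemma CS_set: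
  fixes M :: "'a measure" and f :: "'a \<Rightarrow> ennreal"
  assumes [measurable]: "f \<in> borel_measurable M" "A \<in> sets M"
  shows "(\<integral>\<^sup>+x. f x * indicator A x \<partial>M)\<^sup>2 \<le> emeasure M A * (\<integral>\<^sup>+x. (f x)\<^sup>2 * indicator A x \<partial>M)"
proof -
  have "(\<integral>\<^sup>+x. indicator A x * (f x * indicator A x) \<partial>M)\<^sup>2
     \<le> (\<integral>\<^sup>+x. (indicator A x)^2 \<partial>M) * (\<integral>\<^sup>+x. (f x * indicator A x)^2 \<partial>M)"
    by (rule Cauchy_Schwarz_nn_integral) auto
  moreover have "(\<lambda>x. indicator A x * (f x * indicator A x)) = (\<lambda>x. f x * indicator A x :: ennreal)"
    by (auto simp: indicator_def fun_eq_iff)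
  moreover have "(\<lambda>x. (indicator A x)^2) = (\<lambda>x. indicator A x :: ennreal)"
    by (auto simp: indicator_def fun_eq_iff)
  moreover have "(\<lambda>x. (f x * indicator A x)^2) = (\<lambda>x. (f x)\<^sup>2 * indicator A x :: ennreal)"
    by (auto simp: indicator_def fun_eq_iff)
  ultimately show ?thesis by simp
qed

theorem mainTheorem18:
  fixes P Q :: "'a measure" and E :: "'a set"
  assumes "prob_space P" and "prob_space Q" and "sets P = sets Q"
    and "absolutely_continuous P Q" and "absolutely_continuous Q P"
    and "E \<in> sets P"
    and "chi2 Q P \<noteq> \<infinity>"
  shows "let q = measure Q E; r = enn2real (chi2 Q P) in
         measure P E \<le> (r + 2 * q + sqrt (r\<^sup>2 + 4 * r * q * (1 - q))) / (2 * (1 + r))"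
proof -
  interpret P: prob_space P by fact
  interpret Q: prob_space Q by fact
  define f where "f = RN_deriv P Q"
  have fm[measurable]: "f \<in> borel_measurable P" unfolding f_def by simp
  have dens: "density P f = Q"
    unfolding f_def using assms(3,4) P.density_RN_deriv by simp
  have Qe: "emeasure Q A = (\<integral>\<^sup>+x. f x * indicator A x \<partial>P)" if "A \<in> sets P" for A
    using emeasure_density[OF fm that] dens by simp
  define E' where "E' = space P - E"
  have E'[measurable]: "E' \<in> sets P" unfolding E'_def using assms(6) by auto
  have E[measurable]: "E \<in> sets P" by fact
  define I where "I = (\<integral>\<^sup>+x. (f x)\<^sup>2 \<partial>P)"
  define a where "a = (\<integral>\<^sup>+x. (f x)\<^sup>2 * indicator E x \<partial>P)"
  define b where "b = (\<integral>\<^sup>+x. (f x)\<^sup>2 * indicator E' x \<partial>P)"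
  have Isum: "I = a + b"
  proof -
    have "I = (\<integral>\<^sup>+x. (f x)\<^sup>2 * indicator E x + (f x)\<^sup>2 * indicator E' x \<partial>P)"
      unfolding I_def
      by (rule nn_integral_cong) (auto simp: E'_def indicator_def)
    also have "\<dots> = a + b" unfolding a_def b_def
      by (rule nn_integral_add) auto
    finally show ?thesis .
  qed
  have sP0: "space Q = space P" using sets_eq_imp_space_eq[OF assms(3)] by simp
  have I1: "1 \<le> I"
  proof -
    have "(emeasure Q (space P))\<^sup>2 \<le> emeasure P (space P) * (\<integral>\<^sup>+x. (f x)\<^sup>2 * indicator (space P) x \<partial>P)"
      using CS_set[OF fm, of "space P"] Qe[of "space P"] by simp
    moreover have "emeasure Q (space P) = 1" using Q.emeasure_space_1 sP0 by simp
    moreover have "(\<integral>\<^sup>+x. (f x)\<^sup>2 * indicator (space P) x \<partial>P) = I"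
      unfolding I_def by (rule nn_integral_cong) auto
    ultimately have "1\<^sup>2 \<le> 1 * I" using P.emeasure_space_1 by metis
    then show ?thesis by simp
  qed
  have chi: "chi2 Q P = I - 1" unfolding chi2_def I_def f_def by simp
  have Ifin: "I \<noteq> \<infinity>" using assms(7) chi by (auto simp: ennreal_minus_eq_top)
  have afin: "a \<noteq> \<infinity>" and bfin: "b \<noteq> \<infinity>" using Ifin Isum by auto
  define r where "r = enn2real (chi2 Q P)"
  define q where "q = measure Q E"
  define p where "p = measure P E"
  define a' where "a' = enn2real a"
  define b' where "b' = enn2real b"
  have a'0: "a' \<ge> 0" and b'0: "b' \<ge> 0" unfolding a'_def b'_def by auto
  have r0: "r \<ge> 0" unfolding r_def by simp
  have ab: "a' + b' = 1 + r"
  proof -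
    have "enn2real I = enn2real a + enn2real b" using Isum afin bfin by (simp add: enn2real_plus top.not_eq_extremum)
    moreover have "enn2real I = 1 + r"
    proof -
      have "I = chi2 Q P + 1" unfolding chi using diff_add_cancel_ennreal[OF I1] by simp
      moreover have "chi2 Q P < \<top>" using assms(7) by (simp add: top.not_eq_extremum)
      ultimately show ?thesis unfolding r_def by (simp add: enn2real_plus)
    qed
    ultimately show ?thesis unfolding a'_def b'_def by simp
  qed
  note sP = sP0
  have qE': "measure Q E' = 1 - q" unfolding q_def E'_def
    using Q.prob_compl[of E] assms(3,6) sP by simp
  have pE': "measure P E' = 1 - p" unfolding p_def E'_def
    using P.prob_compl[of E] assms(6) by simp
  have h1: "q\<^sup>2 \<le> p * a'"
  proof -
    have "(emeasure Q E)\<^sup>2 \<le> emeasure P E * a" using CS_set[OF fm E] Qe[OF E] a_def by simp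
    moreover have "a = ennreal a'" unfolding a'_def using afin by (simp add: ennreal_enn2real_if)
    ultimately have "(ennreal q)\<^sup>2 \<le> ennreal p * ennreal a'"
      unfolding q_def p_def by (simp add: Q.emeasure_eq_measure P.emeasure_eq_measure)
    then have "ennreal (q\<^sup>2) \<le> ennreal (p * a')"
      using a'0 by (simp add: ennreal_power ennreal_mult p_def q_def)
    then show ?thesis using a'0 by (simp add: ennreal_le_iff p_def)
  qed
  have h2: "(1 - q)\<^sup>2 \<le> (1 - p) * b'"
  proof -
    have "(emeasure Q E')\<^sup>2 \<le> emeasure P E' * b" using CS_set[OF fm E'] Qe[OF E'] b_def by simp
    moreover have "b = ennreal b'" unfolding b'_def using bfin by (simp add: ennreal_enn2real_if)
    ultimately have "(ennreal (1 - q))\<^sup>2 \<le> ennreal (1 - p) * ennreal b'"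
      unfolding qE'[symmetric] pE'[symmetric] by (simp add: Q.emeasure_eq_measure P.emeasure_eq_measure)
    moreover have "0 \<le> 1 - q" "0 \<le> 1 - p" unfolding q_def p_def by auto
    ultimately have "ennreal ((1 - q)\<^sup>2) \<le> ennreal ((1 - p) * b')"
      using b'0 by (simp add: ennreal_power ennreal_mult)
    then show ?thesis using b'0 \<open>0 \<le> 1 - p\<close> by (subst (asm) ennreal_le_iff) auto
  qed
  have p0: "0 \<le> p" and p1: "p \<le> 1" unfolding p_def by auto
  have "q\<^sup>2 * (1 - p) + (1 - q)\<^sup>2 * p \<le> p * (1 - p) * (1 + r)"
  proof -
    have "q\<^sup>2 * (1 - p) \<le> p * a' * (1 - p)" using h1 p1 by (simp add: mult_right_mono)
    moreover have "(1 - q)\<^sup>2 * p \<le> (1 - p) * b' * p" using h2 p0 by (simp add: mult_right_mono)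
    ultimately have "q\<^sup>2 * (1 - p) + (1 - q)\<^sup>2 * p \<le> p * (1 - p) * (a' + b')"
      by (simp add: algebra_simps)
    then show ?thesis using ab by simp
  qed
  then have "(q - p)^2 \<le> r * p * (1 - p)" by (simp add: power2_eq_square algebra_simps)
  from quad_root_bound[OF r0 this] show ?thesis
    unfolding Let_def p_def q_def r_def by simp
qed

end
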